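(* Let $G$ be a digraph and $i\le0\le j$ integers. Then $G$ has polymorphisms witnessing the $\operatorname{SD}(\vee)$ property if and only if $G^{[i,j]}$ has.
   Context: Digraphs are finite and loopless. For $G=(V,E)$, $G^{[i,j]}$ is the digraph on $\{i,\dots,-1\}\cup V\cup\{1,\dots,j\}$ (disjoint union) whose edges are: $u\to w$ for integers $u<w$ in $\{i,\dots,-1,1,\dots,j\}$; the edges of $E$; $u\to v$ for every integer $u<0$ and $v\in V$; $v\to u$ for every $v\in V$ and integer $u>0$. A polymorphism is a map $f:V^k\to V$ with $(f(a_1,\dots,a_k),f(b_1,\dots,b_k))\in E$ whenever all $(a_i,b_i)\in E$. $\operatorname{SD}(\vee)$ means both of: (a) there are a $3$-ary and a $4$-ary weak NU polymorphism $w_1,w_2$ (idempotent, with $w(y,x,\dots,x)=w(x,y,x,\dots,x)=\dots=w(x,\dots,x,y)$) with $w_1(y,x,x)=w_2(y,x,x,x)$; (b) the Hobby–McKenzie property: there are $n\ge0$ and idempotent ternary polymorphisms $d_0,\dots,d_n,p,e_0,\dots,e_n$ with $x=d_0(x,y,z)$, $e_n(x,y,z)=z$; $d_i(x,y,y)=d_{i+1}(x,y,y)$ and $e_i(x,y,y)=e_{i+1}(x,y,y)$ for even $i<n$; $d_i(x,x,y)=d_{i+1}(x,x,y)$ and $e_i(x,x,y)=e_{i+1}(x,x,y)$ for odd $i<n$; $d_n(x,y,y)=p(x,y,y)$ and $p(x,x,y)=e_0(x,x,y)$; $d_i(x,y,x)=d_{i+1}(x,y,x)$ for odd $i<n$ and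 $e_j(x,y,x)=e_{j+1}(x,y,x)$ for even $j<n$. *)

theory Defs
  imports Main
begin

definition digraph :: "'a set \<Rightarrow> ('a \<times> 'a) set \<Rightarrow> bool" where
  "digraph V E \<longleftrightarrow> finite V \<and> E \<subseteq> V \<times> V \<and> (\<forall>v. (v, v) \<notin> E)"

definition blowup_vertices :: "'a set \<Rightarrow> int \<Rightarrow> int \<Rightarrow> ('a + int) set" where
  "blowup_vertices V i j = Inl ` V \<union> Inr ` ({i..-1} \<union> {1..j})"

definition blowup_edges ::
  "'a set \<Rightarrow> ('a \<times> 'a) set \<Rightarrow> int \<Rightarrow> int \<Rightarrow> (('a + int) \<times> ('a + int)) set" where
  "blowup_edges V E i j =
     {(Inr u, Inr w) | u w. u \<in> {i..-1} \<union> {1..j} \<and> w \<in> {i..-1} \<union> {1..j} \<and> u < w}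
   \<union> {(Inl a, Inl b) | a b. (a, b) \<in> E}
   \<union> {(Inr u, Inl v) | u v. u \<in> {i..-1} \<and> v \<in> V}
   \<union> {(Inl v, Inr u) | v u. v \<in> V \<and> u \<in> {1..j}}"

definition pol3 :: "'a set \<Rightarrow> ('a \<times> 'a) set \<Rightarrow> ('a \<Rightarrow> 'a \<Rightarrow> 'a \<Rightarrow> 'a) \<Rightarrow> bool" where
  "pol3 V E f \<longleftrightarrow>
     (\<forall>a1\<in>V. \<forall>a2\<in>V. \<forall>a3\<in>V. f a1 a2 a3 \<in> V) \<and>
     (\<forall>a1 a2 a3 b1 b2 b3. (a1, b1) \<in> E \<and> (a2, b2) \<in> E \<and> (a3, b3) \<in> E
        \<longrightarrow> (f a1 a2 a3, f b1 b2 b3) \<in> E)"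

definition pol4 :: "'a set \<Rightarrow> ('a \<times> 'a) set \<Rightarrow> ('a \<Rightarrow> 'a \<Rightarrow> 'a \<Rightarrow> 'a \<Rightarrow> 'a) \<Rightarrow> bool" where
  "pol4 V E f \<longleftrightarrow>
     (\<forall>a1\<in>V. \<forall>a2\<in>V. \<forall>a3\<in>V. \<forall>a4\<in>V. f a1 a2 a3 a4 \<in> V) \<and>
     (\<forall>a1 a2 a3 a4 b1 b2 b3 b4. (a1, b1) \<in> E \<and> (a2, b2) \<in> E \<and> (a3, b3) \<in> E \<and> (a4, b4) \<in> E
        \<longrightarrow> (f a1 a2 a3 a4, f b1 b2 b3 b4) \<in> E)"

definition idem3 :: "'a set \<Rightarrow> ('a \<Rightarrow> 'a \<Rightarrow> 'a \<Rightarrow> 'a) \<Rightarrow> bool" where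
  "idem3 V f \<longleftrightarrow> (\<forall>x\<in>V. f x x x = x)"

definition weak_nu3 :: "'a set \<Rightarrow> ('a \<Rightarrow> 'a \<Rightarrow> 'a \<Rightarrow> 'a) \<Rightarrow> bool" where
  "weak_nu3 V w \<longleftrightarrow> idem3 V w \<and>
     (\<forall>x\<in>V. \<forall>y\<in>V. w y x x = w x y x \<and> w x y x = w x x y)"

definition weak_nu4 :: "'a set \<Rightarrow> ('a \<Rightarrow> 'a \<Rightarrow> 'a \<Rightarrow> 'a \<Rightarrow> 'a) \<Rightarrow> bool" where
  "weak_nu4 V w \<longleftrightarrow> (\<forall>x\<in>V. w x x x x = x) \<and>
     (\<forall>x\<in>V. \<forall>y\<in>V. w y x x x = w x y x x \<and> w x y x x = w x x y x \<and> w x x y x = w x x x y)"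

definition has_wnu34 :: "'a set \<Rightarrow> ('a \<times> 'a) set \<Rightarrow> bool" where
  "has_wnu34 V E \<longleftrightarrow> (\<exists>w1 w2. pol3 V E w1 \<and> pol4 V E w2 \<and> weak_nu3 V w1 \<and> weak_nu4 V w2 \<and>
      (\<forall>x\<in>V. \<forall>y\<in>V. w1 y x x = w2 y x x x))"

definition hobby_mckenzie :: "'a set \<Rightarrow> ('a \<times> 'a) set \<Rightarrow> bool" where
  "hobby_mckenzie V E \<longleftrightarrow>
    (\<exists>(n::nat) (d :: nat \<Rightarrow> 'a \<Rightarrow> 'a \<Rightarrow> 'a \<Rightarrow> 'a) p (e :: nat \<Rightarrow> 'a \<Rightarrow> 'a \<Rightarrow> 'a \<Rightarrow> 'a).
       (\<forall>k\<le>n. pol3 V E (d k) \<and> idem3 V (d k) \<and> pol3 V E (e k) \<and> idem3 V (e k)) \<and>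
       pol3 V E p \<and> idem3 V p \<and>
       (\<forall>x\<in>V. \<forall>y\<in>V. \<forall>z\<in>V. d 0 x y z = x \<and> e n x y z = z) \<and>
       (\<forall>k<n. even k \<longrightarrow> (\<forall>x\<in>V. \<forall>y\<in>V.
           d k x y y = d (Suc k) x y y \<and> e k x y y = e (Suc k) x y y)) \<and>
       (\<forall>k<n. odd k \<longrightarrow> (\<forall>x\<in>V. \<forall>y\<in>V.
           d k x x y = d (Suc k) x x y \<and> e k x x y = e (Suc k) x x y)) \<and>
       (\<forall>x\<in>V. \<forall>y\<in>V. d n x y y = p x y y \<and> p x x y = e 0 x x y) \<and>
       (\<forall>k<n. odd k \<longrightarrow> (\<forall>x\<in>V. \<forall>y\<in>V. d k x y x = d (Suc k) x y x)) \<and>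
       (\<forall>k<n. even k \<longrightarrow> (\<forall>x\<in>V. \<forall>y\<in>V. e k x y x = e (Suc k) x y x)))"

definition SD_join :: "'a set \<Rightarrow> ('a \<times> 'a) set \<Rightarrow> bool" where
  "SD_join V E \<longleftrightarrow> has_wnu34 V E \<and> hobby_mckenzie V E"

end

theory Submission
  imports Defs
begin

definition Sx3 :: "'a \<Rightarrow> ('a\<Rightarrow>'a\<Rightarrow>'a\<Rightarrow>'a) \<Rightarrow> ('a\<Rightarrow>'a\<Rightarrow>'a\<Rightarrow>'a)" where
  "Sx3 s f = (\<lambda>x y z. if x = s \<or> y = s \<or> z = s then s else f x y z)"
definition Sx4 :: "'a \<Rightarrow> ('a\<Rightarrow>'a\<Rightarrow>'a\<Rightarrow>'a\<Rightarrow>'a) \<Rightarrow> ('a\<Rightarrow>'a\<Rightarrow>'a\<Rightarrow>'a\<Rightarrow>'a)" where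
  "Sx4 s f = (\<lambda>x y z w. if x = s \<or> y = s \<or> z = s \<or> w = s then s else f x y z w)"
definition Bl :: "'a \<Rightarrow> ('a\<Rightarrow>'a\<Rightarrow>'a\<Rightarrow>'a)" where
  "Bl s = (\<lambda>x y z. if x = s \<or> (y = s) \<noteq> (z = s) then s else x)"
definition Br :: "'a \<Rightarrow> ('a\<Rightarrow>'a\<Rightarrow>'a\<Rightarrow>'a)" where
  "Br s = (\<lambda>x y z. if z = s \<or> (x = s) \<noteq> (y = s) then s else z)"

context
  fixes W :: "'a set" and F :: "('a \<times> 'a) set" and s :: 'a
  assumes FW: "F \<subseteq> W \<times> W" and sW: "s \<notin> W"
begin

lemma edge_cases: "(a, b) \<in> F \<union> {s} \<times> W \<Longrightarrow> b \<in> W \<and> b \<noteq> s \<and> (a = s \<or> (a, b) \<in> F)"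
  using FW sW by auto

lemma pol3_S: assumes "pol3 W F f" shows "pol3 (insert s W) (F \<union> {s} \<times> W) (Sx3 s f)"
  unfolding pol3_def
proof (intro conjI allI impI ballI)
  fix a b c assume "a \<in> insert s W" "b \<in> insert s W" "c \<in> insert s W"
  thus "Sx3 s f a b c \<in> insert s W" using assms unfolding pol3_def Sx3_def by auto
next
  fix a1 a2 a3 b1 b2 b3
  assume h: "(a1, b1) \<in> F \<union> {s} \<times> W \<and> (a2, b2) \<in> F \<union> {s} \<times> W \<and> (a3, b3) \<in> F \<union> {s} \<times> W"
  from h have b: "b1 \<in> W" "b2 \<in> W" "b3 \<in> W" "b1 \<noteq> s" "b2 \<noteq> s" "b3 \<noteq> s"
    and a: "a1 = s \<or> (a1, b1) \<in> F" "a2 = s \<or> (a2, b2) \<in> F" "a3 = s \<or> (a3, b3) \<in> F"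
    using edge_cases by blast+
  have fb: "f b1 b2 b3 \<in> W" using assms b unfolding pol3_def by blast
  show "(Sx3 s f a1 a2 a3, Sx3 s f b1 b2 b3) \<in> F \<union> {s} \<times> W"
  proof (cases "a1 = s \<or> a2 = s \<or> a3 = s")
    case True thus ?thesis using b fb unfolding Sx3_def by auto
  next
    case False
    hence "(f a1 a2 a3, f b1 b2 b3) \<in> F" using a assms unfolding pol3_def by blast
    thus ?thesis using False b unfolding Sx3_def by auto
  qed
qed

lemma pol4_S: assumes "pol4 W F f" shows "pol4 (insert s W) (F \<union> {s} \<times> W) (Sx4 s f)"
  unfolding pol4_def
proof (intro conjI allI impI ballI)
  fix a b c d assume "a \<in> insert s W" "b \<in> insert s W" "c \<in> insert s W" "d \<in> insert s W"
  thus "Sx4 s f a b c d \<in> insert s W" using assms unfolding pol4_def Sx4_def by auto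
next
  fix a1 a2 a3 a4 b1 b2 b3 b4
  assume h: "(a1, b1) \<in> F \<union> {s} \<times> W \<and> (a2, b2) \<in> F \<union> {s} \<times> W \<and> (a3, b3) \<in> F \<union> {s} \<times> W \<and> (a4, b4) \<in> F \<union> {s} \<times> W"
  from h have b: "b1 \<in> W" "b2 \<in> W" "b3 \<in> W" "b4 \<in> W" "b1 \<noteq> s" "b2 \<noteq> s" "b3 \<noteq> s" "b4 \<noteq> s"
    and a: "a1 = s \<or> (a1, b1) \<in> F" "a2 = s \<or> (a2, b2) \<in> F" "a3 = s \<or> (a3, b3) \<in> F" "a4 = s \<or> (a4, b4) \<in> F"
    using edge_cases by blast+
  have fb: "f b1 b2 b3 b4 \<in> W" using assms b unfolding pol4_def by blast
  show "(Sx4 s f a1 a2 a3 a4, Sx4 s f b1 b2 b3 b4) \<in> F \<union> {s} \<times> W"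
  proof (cases "a1 = s \<or> a2 = s \<or> a3 = s \<or> a4 = s")
    case True thus ?thesis using b fb unfolding Sx4_def by auto
  next
    case False
    hence "(f a1 a2 a3 a4, f b1 b2 b3 b4) \<in> F" using a assms unfolding pol4_def by blast
    thus ?thesis using False b unfolding Sx4_def by auto
  qed
qed

lemma pol3_Bl: "pol3 (insert s W) (F \<union> {s} \<times> W) (Bl s)"
  unfolding pol3_def
proof (intro conjI allI impI ballI)
  fix a b c assume "a \<in> insert s W"
  thus "Bl s a b c \<in> insert s W" unfolding Bl_def by auto
next
  fix a1 a2 a3 b1 b2 b3
  assume h: "(a1, b1) \<in> F \<union> {s} \<times> W \<and> (a2, b2) \<in> F \<union> {s} \<times> W \<and> (a3, b3) \<in> F \<union> {s} \<times> W"
  from h have b: "b1 \<in> W" "b2 \<noteq> s" "b3 \<noteq> s" "b1 \<noteq> s" using edge_cases by blast+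
  show "(Bl s a1 a2 a3, Bl s b1 b2 b3) \<in> F \<union> {s} \<times> W"
    using h b unfolding Bl_def by auto
qed

lemma pol3_Br: "pol3 (insert s W) (F \<union> {s} \<times> W) (Br s)"
  unfolding pol3_def
proof (intro conjI allI impI ballI)
  fix a b c assume "c \<in> insert s W"
  thus "Br s a b c \<in> insert s W" unfolding Br_def by auto
next
  fix a1 a2 a3 b1 b2 b3
  assume h: "(a1, b1) \<in> F \<union> {s} \<times> W \<and> (a2, b2) \<in> F \<union> {s} \<times> W \<and> (a3, b3) \<in> F \<union> {s} \<times> W"
  from h have b: "b3 \<in> W" "b2 \<noteq> s" "b3 \<noteq> s" "b1 \<noteq> s" using edge_cases by blast+
  show "(Br s a1 a2 a3, Br s b1 b2 b3) \<in> F \<union> {s} \<times> W"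
    using h b unfolding Br_def by auto
qed

lemma pol3_p1: "pol3 (insert s W) (F \<union> {s} \<times> W) (\<lambda>x y z. x)"
  unfolding pol3_def by auto
lemma pol3_p3: "pol3 (insert s W) (F \<union> {s} \<times> W) (\<lambda>x y z. z)"
  unfolding pol3_def by auto

lemma restrict3:
  assumes "pol3 (insert s W) (F \<union> {s} \<times> W) f" "f s s s = s"
  shows "pol3 W F f"
proof -
  have mem: "f a b c \<in> W" if "a \<in> W" "b \<in> W" "c \<in> W" for a b c
  proof -
    have "(f s s s, f a b c) \<in> F \<union> {s} \<times> W"
      using assms(1) that unfolding pol3_def by blast
    thus ?thesis using FW assms(2) by auto
  qed
  show ?thesis unfolding pol3_def
  proof (intro conjI allI impI ballI)
    fix a b c assume "a \<in> W" "b \<in> W" "c \<in> W" thus "f a b c \<in> W" by (rule mem)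
  next
    fix a1 a2 a3 b1 b2 b3 assume h: "(a1, b1) \<in> F \<and> (a2, b2) \<in> F \<and> (a3, b3) \<in> F"
    hence "(f a1 a2 a3, f b1 b2 b3) \<in> F \<union> {s} \<times> W" using assms(1) unfolding pol3_def by blast
    moreover have "f a1 a2 a3 \<in> W" using h FW by (intro mem) auto
    ultimately show "(f a1 a2 a3, f b1 b2 b3) \<in> F" using sW by auto
  qed
qed

lemma restrict4:
  assumes "pol4 (insert s W) (F \<union> {s} \<times> W) f" "f s s s s = s"
  shows "pol4 W F f"
proof -
  have mem: "f a b c d \<in> W" if "a \<in> W" "b \<in> W" "c \<in> W" "d \<in> W" for a b c d
  proof -
    have "(f s s s s, f a b c d) \<in> F \<union> {s} \<times> W"
      using assms(1) that unfolding pol4_def by blast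
    thus ?thesis using FW assms(2) by auto
  qed
  show ?thesis unfolding pol4_def
  proof (intro conjI allI impI ballI)
    fix a b c d assume "a \<in> W" "b \<in> W" "c \<in> W" "d \<in> W" thus "f a b c d \<in> W" by (rule mem)
  next
    fix a1 a2 a3 a4 b1 b2 b3 b4 assume h: "(a1, b1) \<in> F \<and> (a2, b2) \<in> F \<and> (a3, b3) \<in> F \<and> (a4, b4) \<in> F"
    hence "(f a1 a2 a3 a4, f b1 b2 b3 b4) \<in> F \<union> {s} \<times> W" using assms(1) unfolding pol4_def by blast
    moreover have "f a1 a2 a3 a4 \<in> W" using h FW by (intro mem) auto
    ultimately show "(f a1 a2 a3 a4, f b1 b2 b3 b4) \<in> F" using sW by auto
  qed
qed


abbreviation "W' \<equiv> insert s W"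
abbreviation "F' \<equiv> F \<union> {s} \<times> W"

lemma idem3_S: "idem3 W f \<Longrightarrow> idem3 W' (Sx3 s f)"
  unfolding idem3_def Sx3_def by auto

lemma wnu3_S: "weak_nu3 W f \<Longrightarrow> weak_nu3 W' (Sx3 s f)"
  unfolding weak_nu3_def idem3_def Sx3_def by auto

lemma wnu4_S: "weak_nu4 W f \<Longrightarrow> weak_nu4 W' (Sx4 s f)"
  unfolding weak_nu4_def Sx4_def by auto

lemma wnu_src: assumes "has_wnu34 W F" shows "has_wnu34 W' F'"
proof -
  obtain w1 w2 where h: "pol3 W F w1" "pol4 W F w2" "weak_nu3 W w1" "weak_nu4 W w2"
     "\<forall>x\<in>W. \<forall>y\<in>W. w1 y x x = w2 y x x x" using assms unfolding has_wnu34_def by (elim exE conjE) (rule that; assumption)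
  have "\<forall>x\<in>W'. \<forall>y\<in>W'. Sx3 s w1 y x x = Sx4 s w2 y x x x"
    using h(5) unfolding Sx3_def Sx4_def by auto
  thus ?thesis unfolding has_wnu34_def
    using pol3_S[OF h(1)] pol4_S[OF h(2)] wnu3_S[OF h(3)] wnu4_S[OF h(4)] by blast
qed

lemma wnu_res: assumes "has_wnu34 W' F'" shows "has_wnu34 W F"
proof -
  obtain w1 w2 where h: "pol3 W' F' w1" "pol4 W' F' w2" "weak_nu3 W' w1" "weak_nu4 W' w2"
     "\<forall>x\<in>W'. \<forall>y\<in>W'. w1 y x x = w2 y x x x" using assms unfolding has_wnu34_def by (elim exE conjE) (rule that; assumption)
  have i: "w1 s s s = s" "w2 s s s s = s" using h(3,4) unfolding weak_nu3_def weak_nu4_def idem3_def by auto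
  have "weak_nu3 W w1" "weak_nu4 W w2" using h(3,4) unfolding weak_nu3_def weak_nu4_def idem3_def by auto
  moreover have "\<forall>x\<in>W. \<forall>y\<in>W. w1 y x x = w2 y x x x" using h(5) by auto
  ultimately show ?thesis unfolding has_wnu34_def
    using restrict3[OF h(1) i(1)] restrict4[OF h(2) i(2)] by blast
qed

lemma hm_res: assumes "hobby_mckenzie W' F'" shows "hobby_mckenzie W F"
proof -
  obtain n d p e where h:
       "(\<forall>k\<le>n. pol3 W' F' (d k) \<and> idem3 W' (d k) \<and> pol3 W' F' (e k) \<and> idem3 W' (e k))"
       "pol3 W' F' p" "idem3 W' p"
       "(\<forall>x\<in>W'. \<forall>y\<in>W'. \<forall>z\<in>W'. d 0 x y z = x \<and> e n x y z = z)"
       "(\<forall>k<n. even k \<longrightarrow> (\<forall>x\<in>W'. \<forall>y\<in>W'.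
           d k x y y = d (Suc k) x y y \<and> e k x y y = e (Suc k) x y y))"
       "(\<forall>k<n. odd k \<longrightarrow> (\<forall>x\<in>W'. \<forall>y\<in>W'.
           d k x x y = d (Suc k) x x y \<and> e k x x y = e (Suc k) x x y))"
       "(\<forall>x\<in>W'. \<forall>y\<in>W'. d n x y y = p x y y \<and> p x x y = e 0 x x y)"
       "(\<forall>k<n. odd k \<longrightarrow> (\<forall>x\<in>W'. \<forall>y\<in>W'. d k x y x = d (Suc k) x y x))"
       "(\<forall>k<n. even k \<longrightarrow> (\<forall>x\<in>W'. \<forall>y\<in>W'. e k x y x = e (Suc k) x y x))"
    using assms unfolding hobby_mckenzie_def by (elim exE conjE) (rule that; assumption)
  have R: "pol3 W F f \<and> idem3 W f" if "pol3 W' F' f" "idem3 W' f" for f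
    using restrict3[OF that(1)] that(2) unfolding idem3_def by auto
  have A: "\<forall>k\<le>n. pol3 W F (d k) \<and> idem3 W (d k) \<and> pol3 W F (e k) \<and> idem3 W (e k)"
    using h(1) R by blast
  have B: "pol3 W F p \<and> idem3 W p" using R h(2,3) by blast
  have W: "W \<subseteq> W'" by blast
  show ?thesis unfolding hobby_mckenzie_def
    apply (rule exI[of _ n], rule exI[of _ d], rule exI[of _ p], rule exI[of _ e])
    apply (intro conjI)
    using A apply blast
    using B apply blast
    using B apply blast
    using h(4) W apply blast
    using h(5) W apply blast
    using h(6) W apply blast
    using h(7) W apply blast
    using h(8) W apply blast
    using h(9) W apply blast
    done
qed


lemma Syy: "(\<forall>x\<in>W. \<forall>y\<in>W. f x y y = g x y y) \<Longrightarrow> x \<in> W' \<Longrightarrow> y \<in> W' \<Longrightarrow> Sx3 s f x y y = Sx3 s g x y y"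
  unfolding Sx3_def by auto
lemma Sxxy: "(\<forall>x\<in>W. \<forall>y\<in>W. f x x y = g x x y) \<Longrightarrow> x \<in> W' \<Longrightarrow> y \<in> W' \<Longrightarrow> Sx3 s f x x y = Sx3 s g x x y"
  unfolding Sx3_def by auto
lemma Sxyx: "(\<forall>x\<in>W. \<forall>y\<in>W. f x y x = g x y x) \<Longrightarrow> x \<in> W' \<Longrightarrow> y \<in> W' \<Longrightarrow> Sx3 s f x y x = Sx3 s g x y x"
  unfolding Sx3_def by auto

lemma hm_src: assumes "hobby_mckenzie W F" shows "hobby_mckenzie W' F'"
proof -
  obtain n d p e where h:
       "(\<forall>k\<le>n. pol3 W F (d k) \<and> idem3 W (d k) \<and> pol3 W F (e k) \<and> idem3 W (e k))"
       "pol3 W F p" "idem3 W p"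
       "(\<forall>x\<in>W. \<forall>y\<in>W. \<forall>z\<in>W. d 0 x y z = x \<and> e n x y z = z)"
       "(\<forall>k<n. even k \<longrightarrow> (\<forall>x\<in>W. \<forall>y\<in>W.
           d k x y y = d (Suc k) x y y \<and> e k x y y = e (Suc k) x y y))"
       "(\<forall>k<n. odd k \<longrightarrow> (\<forall>x\<in>W. \<forall>y\<in>W.
           d k x x y = d (Suc k) x x y \<and> e k x x y = e (Suc k) x x y))"
       "(\<forall>x\<in>W. \<forall>y\<in>W. d n x y y = p x y y \<and> p x x y = e 0 x x y)"
       "(\<forall>k<n. odd k \<longrightarrow> (\<forall>x\<in>W. \<forall>y\<in>W. d k x y x = d (Suc k) x y x))"
       "(\<forall>k<n. even k \<longrightarrow> (\<forall>x\<in>W. \<forall>y\<in>W. e k x y x = e (Suc k) x y x))"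
    using assms unfolding hobby_mckenzie_def by (elim exE conjE) (rule that; assumption)
  define N where "N = n + 2 + n mod 2"
  define d' where "d' = (\<lambda>k. if k = 0 then (\<lambda>x y z. x) else if k = 1 then Bl s else Sx3 s (d (min (k-2) n)))"
  define e' where "e' = (\<lambda>k. if k = N then (\<lambda>x y z. z) else if k = N - 1 then Br s else Sx3 s (e (min k n)))"
  define p' where "p' = Sx3 s p"
  have N2: "N \<ge> n + 2" and evN: "even N" unfolding N_def by presburger+
  have id1: "idem3 W' (\<lambda>x y z. x)" "idem3 W' (\<lambda>x y z. z)" "idem3 W' (Bl s)" "idem3 W' (Br s)"
    unfolding idem3_def Bl_def Br_def by auto
  have Pd: "pol3 W' F' (d' k) \<and> idem3 W' (d' k)" for k
  proof -
    have "min (k-2) n \<le> n" by simp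
    hence "pol3 W F (d (min (k-2) n)) \<and> idem3 W (d (min (k-2) n))" using h(1) by blast
    hence "pol3 W' F' (Sx3 s (d (min (k-2) n))) \<and> idem3 W' (Sx3 s (d (min (k-2) n)))"
      using pol3_S idem3_S by blast
    thus ?thesis unfolding d'_def using pol3_p1 pol3_Bl id1 by simp
  qed
  have Pe: "pol3 W' F' (e' k) \<and> idem3 W' (e' k)" for k
  proof -
    have "min k n \<le> n" by simp
    hence "pol3 W F (e (min k n)) \<and> idem3 W (e (min k n))" using h(1) by blast
    hence "pol3 W' F' (Sx3 s (e (min k n))) \<and> idem3 W' (Sx3 s (e (min k n)))"
      using pol3_S idem3_S by blast
    thus ?thesis unfolding e'_def using pol3_p3 pol3_Br id1 by simp
  qed
  have Pp: "pol3 W' F' p' \<and> idem3 W' p'" unfolding p'_def using pol3_S idem3_S h(2,3) by blast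
  have dgen: "d' k = Sx3 s (d (min (k-2) n))" if "k \<ge> 2" for k unfolding d'_def using that by auto
  have egen: "e' k = Sx3 s (e (min k n))" if "k + 1 < N" for k unfolding e'_def using that by auto
  have d0: "\<forall>x\<in>W. \<forall>y\<in>W. \<forall>z\<in>W. d 0 x y z = x" and en: "\<forall>x\<in>W. \<forall>y\<in>W. \<forall>z\<in>W. e n x y z = z"
    using h(4) by auto
  have dS: "d' (Suc (Suc m)) = Sx3 s (d (min m n))" for m unfolding d'_def by simp
  have C4d: "d' k x y y = d' (Suc k) x y y" if "even k" "x \<in> W'" "y \<in> W'" for k x y
  proof (cases "k = 0")
    case True thus ?thesis unfolding d'_def Bl_def by auto
  next
    case False
    with that have "k \<ge> 2" by presburger
    then obtain m where k: "k = Suc (Suc m)" by (metis add_2_eq_Suc le_Suc_ex add.commute)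
    have em: "even m" using that k by simp
    show ?thesis
    proof (cases "m < n")
      case True
      hence "\<forall>x\<in>W. \<forall>y\<in>W. d m x y y = d (Suc m) x y y" using h(5) em by blast
      hence "Sx3 s (d m) x y y = Sx3 s (d (Suc m)) x y y" using Syy that(2,3) by blast
      moreover have "min m n = m" "min (Suc m) n = Suc m" using True by auto
      ultimately show ?thesis unfolding k dS by simp
    next
      case False
      hence "min m n = n" "min (Suc m) n = n" by auto
      thus ?thesis unfolding k dS by simp
    qed
  qed
  have C5d: "d' k x x y = d' (Suc k) x x y \<and> d' k x y x = d' (Suc k) x y x" if "odd k" "x \<in> W'" "y \<in> W'" for k x y
  proof (cases "k = 1")
    case True
    have "d' k = Bl s" "d' (Suc k) = Sx3 s (d 0)" using True unfolding d'_def by auto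
    thus ?thesis using d0 that unfolding Bl_def Sx3_def by auto
  next
    case False
    with that have "k \<ge> 2" by presburger
    then obtain m where k: "k = Suc (Suc m)" by (metis add_2_eq_Suc le_Suc_ex add.commute)
    have om: "odd m" using that k by simp
    show ?thesis
    proof (cases "m < n")
      case True
      hence "\<forall>x\<in>W. \<forall>y\<in>W. d m x x y = d (Suc m) x x y"
            "\<forall>x\<in>W. \<forall>y\<in>W. d m x y x = d (Suc m) x y x" using h(6) h(8) om by blast+
      hence "Sx3 s (d m) x x y = Sx3 s (d (Suc m)) x x y"
         "Sx3 s (d m) x y x = Sx3 s (d (Suc m)) x y x" using Sxxy Sxyx that(2,3) by blast+
      moreover have "min m n = m" "min (Suc m) n = Suc m" using True by auto
      ultimately show ?thesis unfolding k dS by simp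
    next
      case False
      hence "min m n = n" "min (Suc m) n = n" by auto
      thus ?thesis unfolding k dS by simp
    qed
  qed
  have C4e: "e' k x y y = e' (Suc k) x y y \<and> e' k x y x = e' (Suc k) x y x" if "even k" "k < N" "x \<in> W'" "y \<in> W'" for k x y
  proof (cases "Suc k = N - 1")
    case True
    have "e' k = Sx3 s (e n)" using egen[of k] True N2 by auto
    moreover have "e' (Suc k) = Br s" using True N2 unfolding e'_def by auto
    ultimately show ?thesis using en that unfolding Br_def Sx3_def by auto
  next
    case False
    have "Suc k \<noteq> N" using that evN by presburger
    hence k1: "Suc k + 1 < N" using False that by auto
    show ?thesis
    proof (cases "k < n")
      case True
      have q1: "\<forall>x\<in>W. \<forall>y\<in>W. e k x y y = e (Suc k) x y y" using h(5) True that(1) by blast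
      have q2: "\<forall>x\<in>W. \<forall>y\<in>W. e k x y x = e (Suc k) x y x" using h(9) True that(1) by blast
      have "min k n = k" "min (Suc k) n = Suc k" using True by auto
      have "Sx3 s (e k) x y y = Sx3 s (e (Suc k)) x y y"
         "Sx3 s (e k) x y x = Sx3 s (e (Suc k)) x y x"
        using Syy[of "e k" "e (Suc k)", OF q1 that(3,4)] Sxyx[of "e k" "e (Suc k)", OF q2 that(3,4)] by auto
      thus ?thesis using egen[of k] egen[of "Suc k"] k1 \<open>min k n = k\<close> \<open>min (Suc k) n = Suc k\<close> by simp
    next
      case False
      hence "min k n = n" "min (Suc k) n = n" by auto
      thus ?thesis using egen[of k] egen[of "Suc k"] k1 by simp
    qed
  qed
  have C5e: "e' k x x y = e' (Suc k) x x y" if "odd k" "k < N" "x \<in> W'" "y \<in> W'" for k x y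
  proof (cases "Suc k = N")
    case True
    have "e' k = Br s" "e' (Suc k) = (\<lambda>x y z. z)" using True unfolding e'_def by auto
    thus ?thesis using that unfolding Br_def by auto
  next
    case False
    have "Suc k \<noteq> N - 1" using that evN N2 by presburger
    hence k1: "Suc k + 1 < N" using False that by auto
    show ?thesis
    proof (cases "k < n")
      case True
      have q: "\<forall>x\<in>W. \<forall>y\<in>W. e k x x y = e (Suc k) x x y" using h(6) True that(1) by blast
      have "min k n = k" "min (Suc k) n = Suc k" using True by auto
      have "Sx3 s (e k) x x y = Sx3 s (e (Suc k)) x x y" using Sxxy[of "e k" "e (Suc k)", OF q that(3,4)] .
      thus ?thesis using egen[of k] egen[of "Suc k"] k1 \<open>min k n = k\<close> \<open>min (Suc k) n = Suc k\<close> by simp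
    next
      case False
      hence "min k n = n" "min (Suc k) n = n" by auto
      thus ?thesis using egen[of k] egen[of "Suc k"] k1 by simp
    qed
  qed
  have C6: "d' N x y y = p' x y y \<and> p' x x y = e' 0 x x y" if "x \<in> W'" "y \<in> W'" for x y
  proof -
    have "d' N = Sx3 s (d n)" using dgen[of N] N2 by auto
    moreover have "e' 0 = Sx3 s (e 0)" using egen[of 0] N2 by auto
    moreover have "\<forall>x\<in>W. \<forall>y\<in>W. d n x y y = p x y y" "\<forall>x\<in>W. \<forall>y\<in>W. p x x y = e 0 x x y"
      using h(7) by auto
    ultimately show ?thesis unfolding p'_def using Syy[of "d n" p] Sxxy[of p "e 0"] that by simp
  qed
  have C3: "d' 0 x y z = x \<and> e' N x y z = z" for x y z unfolding d'_def e'_def by auto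
  show ?thesis unfolding hobby_mckenzie_def
    apply (rule exI[of _ N], rule exI[of _ d'], rule exI[of _ p'], rule exI[of _ e'])
    apply (intro conjI)
    using Pd Pe apply blast
    using Pp apply blast
    using Pp apply blast
    using C3 apply blast
    using C4d C4e apply blast
    using C5d C5e apply blast
    using C6 apply blast
    using C5d apply blast
    using C4e apply blast
    done
qed

lemma SD_src: "SD_join W F \<longleftrightarrow> SD_join W' F'"
  unfolding SD_join_def using wnu_src wnu_res hm_src hm_res by blast

end

lemma pol3_conv: "pol3 V (converse E) f = pol3 V E f"
  unfolding pol3_def converse_iff by blast
lemma pol4_conv: "pol4 V (converse E) f = pol4 V E f"
  unfolding pol4_def converse_iff by blast
lemma SD_conv: "SD_join V (converse E) = SD_join V E"
  unfolding SD_join_def has_wnu34_def hobby_mckenzie_def pol3_conv pol4_conv ..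

lemma SD_sink:
  assumes "F \<subseteq> W \<times> W" "t \<notin> W"
  shows "SD_join W F \<longleftrightarrow> SD_join (insert t W) (F \<union> W \<times> {t})"
proof -
  have c: "converse (F \<union> W \<times> {t}) = converse F \<union> {t} \<times> W" by auto
  have "converse F \<subseteq> W \<times> W" using assms(1) by auto
  hence "SD_join W (converse F) \<longleftrightarrow> SD_join (insert t W) (converse F \<union> {t} \<times> W)"
    by (rule SD_src[OF _ assms(2)])
  also have "\<dots> \<longleftrightarrow> SD_join (insert t W) (converse (F \<union> W \<times> {t}))" unfolding c ..
  finally show ?thesis unfolding SD_conv .
qed

context
  fixes V :: "'a set" and E :: "('a \<times> 'a) set"
begin

lemma be_mem:
  "(Inr u, Inr w) \<in> blowup_edges V E i j \<longleftrightarrow> ((i \<le> u \<and> u \<le> -1) \<or> (1 \<le> u \<and> u \<le> j)) \<and> ((i \<le> w \<and> w \<le> -1) \<or> (1 \<le> w \<and> w \<le> j)) \<and> u < w"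
  "(Inl a, Inl b) \<in> blowup_edges V E i j \<longleftrightarrow> (a, b) \<in> E"
  "(Inr u, Inl v) \<in> blowup_edges V E i j \<longleftrightarrow> i \<le> u \<and> u \<le> -1 \<and> v \<in> V"
  "(Inl v, Inr u) \<in> blowup_edges V E i j \<longleftrightarrow> v \<in> V \<and> 1 \<le> u \<and> u \<le> j"
  unfolding blowup_edges_def by auto

lemma bv_mem:
  "Inl a \<in> blowup_vertices V i j \<longleftrightarrow> a \<in> V"
  "Inr u \<in> blowup_vertices V i j \<longleftrightarrow> (i \<le> u \<and> u \<le> -1) \<or> (1 \<le> u \<and> u \<le> j)"
  unfolding blowup_vertices_def by auto

lemma bv_src: "i \<le> 0 \<Longrightarrow> blowup_vertices V (i-1) j = insert (Inr (i-1)) (blowup_vertices V i j)"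
proof (rule set_eqI)
  fix x assume "i \<le> 0" thus "x \<in> blowup_vertices V (i-1) j \<longleftrightarrow> x \<in> insert (Inr (i-1)) (blowup_vertices V i j)"
    by (cases x) (auto simp: bv_mem)
qed

lemma bv_src_notin: "i \<le> 0 \<Longrightarrow> Inr (i-1) \<notin> blowup_vertices V i j"
  by (simp add: bv_mem)

lemma be_src: "i \<le> 0 \<Longrightarrow> blowup_edges V E (i-1) j = blowup_edges V E i j \<union> {Inr (i-1)} \<times> blowup_vertices V i j"
proof (rule set_eqI)
  fix x :: "('a + int) \<times> ('a + int)" assume i: "i \<le> 0"
  obtain a b where x: "x = (a, b)" by fastforce
  show "x \<in> blowup_edges V E (i-1) j \<longleftrightarrow> x \<in> blowup_edges V E i j \<union> {Inr (i-1)} \<times> blowup_vertices V i j"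
    unfolding x using i by (cases a; cases b) (auto simp: be_mem bv_mem)
qed

lemma bv_sink: "0 \<le> j \<Longrightarrow> blowup_vertices V i (j+1) = insert (Inr (j+1)) (blowup_vertices V i j)"
proof (rule set_eqI)
  fix x assume "0 \<le> j" thus "x \<in> blowup_vertices V i (j+1) \<longleftrightarrow> x \<in> insert (Inr (j+1)) (blowup_vertices V i j)"
    by (cases x) (auto simp: bv_mem)
qed

lemma bv_sink_notin: "0 \<le> j \<Longrightarrow> Inr (j+1) \<notin> blowup_vertices V i j"
  by (simp add: bv_mem)

lemma be_sink: "0 \<le> j \<Longrightarrow> blowup_edges V E i (j+1) = blowup_edges V E i j \<union> blowup_vertices V i j \<times> {Inr (j+1)}"
proof (rule set_eqI)
  fix x :: "('a + int) \<times> ('a + int)" assume j: "0 \<le> j"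
  obtain a b where x: "x = (a, b)" by fastforce
  show "x \<in> blowup_edges V E i (j+1) \<longleftrightarrow> x \<in> blowup_edges V E i j \<union> blowup_vertices V i j \<times> {Inr (j+1)}"
    unfolding x using j by (cases a; cases b) (auto simp: be_mem bv_mem)
qed

lemma be_sub: "E \<subseteq> V \<times> V \<Longrightarrow> blowup_edges V E i j \<subseteq> blowup_vertices V i j \<times> blowup_vertices V i j"
  unfolding blowup_vertices_def blowup_edges_def by auto

end


definition L3 :: "('a\<Rightarrow>'a\<Rightarrow>'a\<Rightarrow>'a) \<Rightarrow> ('a+int \<Rightarrow> 'a+int \<Rightarrow> 'a+int \<Rightarrow> 'a+int)" where
  "L3 f = (\<lambda>x y z. Inl (f (projl x) (projl y) (projl z)))"
definition L4 :: "('a\<Rightarrow>'a\<Rightarrow>'a\<Rightarrow>'a\<Rightarrow>'a) \<Rightarrow> ('a+int \<Rightarrow> 'a+int \<Rightarrow> 'a+int \<Rightarrow> 'a+int \<Rightarrow> 'a+int)" where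
  "L4 f = (\<lambda>x y z w. Inl (f (projl x) (projl y) (projl z) (projl w)))"
definition R3 :: "('a+int \<Rightarrow> 'a+int \<Rightarrow> 'a+int \<Rightarrow> 'a+int) \<Rightarrow> ('a\<Rightarrow>'a\<Rightarrow>'a\<Rightarrow>'a)" where
  "R3 g = (\<lambda>a b c. projl (g (Inl a) (Inl b) (Inl c)))"
definition R4 :: "('a+int \<Rightarrow> 'a+int \<Rightarrow> 'a+int \<Rightarrow> 'a+int \<Rightarrow> 'a+int) \<Rightarrow> ('a\<Rightarrow>'a\<Rightarrow>'a\<Rightarrow>'a\<Rightarrow>'a)" where
  "R4 g = (\<lambda>a b c d. projl (g (Inl a) (Inl b) (Inl c) (Inl d)))"

lemma pol3_E: "pol3 V E f \<Longrightarrow> (a1,b1)\<in>E \<Longrightarrow> (a2,b2)\<in>E \<Longrightarrow> (a3,b3)\<in>E \<Longrightarrow> (f a1 a2 a3, f b1 b2 b3) \<in> E"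
  unfolding pol3_def by blast
lemma pol3_V: "pol3 V E f \<Longrightarrow> a\<in>V \<Longrightarrow> b\<in>V \<Longrightarrow> c\<in>V \<Longrightarrow> f a b c \<in> V"
  unfolding pol3_def by blast
lemma pol4_E: "pol4 V E f \<Longrightarrow> (a1,b1)\<in>E \<Longrightarrow> (a2,b2)\<in>E \<Longrightarrow> (a3,b3)\<in>E \<Longrightarrow> (a4,b4)\<in>E \<Longrightarrow> (f a1 a2 a3 a4, f b1 b2 b3 b4) \<in> E"
  unfolding pol4_def by blast
lemma pol4_V: "pol4 V E f \<Longrightarrow> a\<in>V \<Longrightarrow> b\<in>V \<Longrightarrow> c\<in>V \<Longrightarrow> d\<in>V \<Longrightarrow> f a b c d \<in> V"
  unfolding pol4_def by blast
lemma pol3_I: "(\<And>a b c. a\<in>V \<Longrightarrow> b\<in>V \<Longrightarrow> c\<in>V \<Longrightarrow> f a b c \<in> V) \<Longrightarrow>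
   (\<And>a1 a2 a3 b1 b2 b3. (a1,b1)\<in>E \<Longrightarrow> (a2,b2)\<in>E \<Longrightarrow> (a3,b3)\<in>E \<Longrightarrow> (f a1 a2 a3, f b1 b2 b3) \<in> E) \<Longrightarrow> pol3 V E f"
  unfolding pol3_def by blast
lemma pol4_I: "(\<And>a b c d. a\<in>V \<Longrightarrow> b\<in>V \<Longrightarrow> c\<in>V \<Longrightarrow> d\<in>V \<Longrightarrow> f a b c d \<in> V) \<Longrightarrow>
   (\<And>a1 a2 a3 a4 b1 b2 b3 b4. (a1,b1)\<in>E \<Longrightarrow> (a2,b2)\<in>E \<Longrightarrow> (a3,b3)\<in>E \<Longrightarrow> (a4,b4)\<in>E \<Longrightarrow> (f a1 a2 a3 a4, f b1 b2 b3 b4) \<in> E) \<Longrightarrow> pol4 V E f"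
  unfolding pol4_def by blast

context
  fixes V :: "'a set" and E :: "('a \<times> 'a) set"
begin

abbreviation "VI \<equiv> (Inl ` V :: ('a + int) set)"
abbreviation "EI \<equiv> {(Inl a, Inl b) | a b. (a, b) \<in> E} :: (('a + int) \<times> ('a + int)) set"

lemma EI_D: "(x, y) \<in> EI \<Longrightarrow> (projl x, projl y) \<in> E"
  by auto
lemma VI_D: "x \<in> VI \<Longrightarrow> projl x \<in> V"
  by auto
lemma EI_I: "(a, b) \<in> E \<Longrightarrow> (Inl a, Inl b) \<in> EI"
  by auto

lemma pol3_L: assumes "pol3 V E f" shows "pol3 VI EI (L3 f)"
proof (rule pol3_I)
  fix a b c assume "a \<in> VI" "b \<in> VI" "c \<in> VI"
  thus "L3 f a b c \<in> VI" unfolding L3_def by (intro imageI pol3_V[OF assms] VI_D)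
next
  fix a1 a2 a3 b1 b2 b3 assume "(a1, b1) \<in> EI" "(a2, b2) \<in> EI" "(a3, b3) \<in> EI"
  thus "(L3 f a1 a2 a3, L3 f b1 b2 b3) \<in> EI" unfolding L3_def by (intro EI_I pol3_E[OF assms] EI_D)
qed

lemma pol4_L: assumes "pol4 V E f" shows "pol4 VI EI (L4 f)"
proof (rule pol4_I)
  fix a b c d assume "a \<in> VI" "b \<in> VI" "c \<in> VI" "d \<in> VI"
  thus "L4 f a b c d \<in> VI" unfolding L4_def by (intro imageI pol4_V[OF assms] VI_D)
next
  fix a1 a2 a3 a4 b1 b2 b3 b4 assume "(a1, b1) \<in> EI" "(a2, b2) \<in> EI" "(a3, b3) \<in> EI" "(a4, b4) \<in> EI"
  thus "(L4 f a1 a2 a3 a4, L4 f b1 b2 b3 b4) \<in> EI" unfolding L4_def by (intro EI_I pol4_E[OF assms] EI_D)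
qed

lemma pol3_R: assumes "pol3 VI EI g" shows "pol3 V E (R3 g)"
proof (rule pol3_I)
  fix a b c assume "a \<in> V" "b \<in> V" "c \<in> V"
  thus "R3 g a b c \<in> V" unfolding R3_def by (intro VI_D pol3_V[OF assms] imageI)
next
  fix a1 a2 a3 b1 b2 b3 assume "(a1, b1) \<in> E" "(a2, b2) \<in> E" "(a3, b3) \<in> E"
  thus "(R3 g a1 a2 a3, R3 g b1 b2 b3) \<in> E" unfolding R3_def by (intro EI_D pol3_E[OF assms] EI_I)
qed

lemma pol4_R: assumes "pol4 VI EI g" shows "pol4 V E (R4 g)"
proof (rule pol4_I)
  fix a b c d assume "a \<in> V" "b \<in> V" "c \<in> V" "d \<in> V"
  thus "R4 g a b c d \<in> V" unfolding R4_def by (intro VI_D pol4_V[OF assms] imageI)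
next
  fix a1 a2 a3 a4 b1 b2 b3 b4 assume "(a1, b1) \<in> E" "(a2, b2) \<in> E" "(a3, b3) \<in> E" "(a4, b4) \<in> E"
  thus "(R4 g a1 a2 a3 a4, R4 g b1 b2 b3 b4) \<in> E" unfolding R4_def by (intro EI_D pol4_E[OF assms] EI_I)
qed


lemma idem3_L: "idem3 V f \<Longrightarrow> idem3 VI (L3 f)" unfolding idem3_def L3_def by auto
lemma idem3_R: "idem3 VI g \<Longrightarrow> idem3 V (R3 g)" unfolding idem3_def R3_def by force
lemma wnu3_L: "weak_nu3 V f \<Longrightarrow> weak_nu3 VI (L3 f)" unfolding weak_nu3_def idem3_def L3_def by auto
lemma wnu3_R: "weak_nu3 VI g \<Longrightarrow> weak_nu3 V (R3 g)" unfolding weak_nu3_def idem3_def R3_def by force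
lemma wnu4_L: "weak_nu4 V f \<Longrightarrow> weak_nu4 VI (L4 f)" unfolding weak_nu4_def L4_def by auto
lemma wnu4_R: "weak_nu4 VI g \<Longrightarrow> weak_nu4 V (R4 g)" unfolding weak_nu4_def R4_def by force

lemma wnu_L: assumes "has_wnu34 V E" shows "has_wnu34 VI EI"
proof -
  obtain w1 w2 where h: "pol3 V E w1" "pol4 V E w2" "weak_nu3 V w1" "weak_nu4 V w2"
     "\<forall>x\<in>V. \<forall>y\<in>V. w1 y x x = w2 y x x x" using assms unfolding has_wnu34_def by (elim exE conjE) (rule that; assumption)
  have "\<forall>x\<in>VI. \<forall>y\<in>VI. L3 w1 y x x = L4 w2 y x x x" using h(5) unfolding L3_def L4_def by auto
  thus ?thesis unfolding has_wnu34_def using pol3_L[OF h(1)] pol4_L[OF h(2)] wnu3_L[OF h(3)] wnu4_L[OF h(4)] by blast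
qed

lemma wnu_R: assumes "has_wnu34 VI EI" shows "has_wnu34 V E"
proof -
  obtain w1 w2 where h: "pol3 VI EI w1" "pol4 VI EI w2" "weak_nu3 VI w1" "weak_nu4 VI w2"
     "\<forall>x\<in>VI. \<forall>y\<in>VI. w1 y x x = w2 y x x x" using assms unfolding has_wnu34_def by (elim exE conjE) (rule that; assumption)
  have "\<forall>x\<in>V. \<forall>y\<in>V. R3 w1 y x x = R4 w2 y x x x" using h(5) unfolding R3_def R4_def by auto
  thus ?thesis unfolding has_wnu34_def using pol3_R[OF h(1)] pol4_R[OF h(2)] wnu3_R[OF h(3)] wnu4_R[OF h(4)] by blast
qed

lemma hm_L: assumes "hobby_mckenzie V E" shows "hobby_mckenzie VI EI"
proof -
  obtain n d p e where h:
       "(\<forall>k\<le>n. pol3 V E (d k) \<and> idem3 V (d k) \<and> pol3 V E (e k) \<and> idem3 V (e k))"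
       "pol3 V E p" "idem3 V p"
       "(\<forall>x\<in>V. \<forall>y\<in>V. \<forall>z\<in>V. d 0 x y z = x \<and> e n x y z = z)"
       "(\<forall>k<n. even k \<longrightarrow> (\<forall>x\<in>V. \<forall>y\<in>V.
           d k x y y = d (Suc k) x y y \<and> e k x y y = e (Suc k) x y y))"
       "(\<forall>k<n. odd k \<longrightarrow> (\<forall>x\<in>V. \<forall>y\<in>V.
           d k x x y = d (Suc k) x x y \<and> e k x x y = e (Suc k) x x y))"
       "(\<forall>x\<in>V. \<forall>y\<in>V. d n x y y = p x y y \<and> p x x y = e 0 x x y)"
       "(\<forall>k<n. odd k \<longrightarrow> (\<forall>x\<in>V. \<forall>y\<in>V. d k x y x = d (Suc k) x y x))"
       "(\<forall>k<n. even k \<longrightarrow> (\<forall>x\<in>V. \<forall>y\<in>V. e k x y x = e (Suc k) x y x))"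
    using assms unfolding hobby_mckenzie_def by (elim exE conjE) (rule that; assumption)
  show ?thesis unfolding hobby_mckenzie_def
    apply (rule exI[of _ n], rule exI[of _ "\<lambda>k. L3 (d k)"], rule exI[of _ "L3 p"], rule exI[of _ "\<lambda>k. L3 (e k)"])
    apply (intro conjI)
    subgoal using h(1) pol3_L idem3_L by blast
    subgoal using h(2) by (rule pol3_L)
    subgoal using h(3) by (rule idem3_L)
    subgoal using h(4) unfolding L3_def by auto
    subgoal using h(5) unfolding L3_def by auto
    subgoal using h(6) unfolding L3_def by auto
    subgoal using h(7) unfolding L3_def by auto
    subgoal using h(8) unfolding L3_def by auto
    subgoal using h(9) unfolding L3_def by auto
    done
qed

lemma hm_R: assumes "hobby_mckenzie VI EI" shows "hobby_mckenzie V E"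
proof -
  obtain n d p e where h:
       "(\<forall>k\<le>n. pol3 VI EI (d k) \<and> idem3 VI (d k) \<and> pol3 VI EI (e k) \<and> idem3 VI (e k))"
       "pol3 VI EI p" "idem3 VI p"
       "(\<forall>x\<in>VI. \<forall>y\<in>VI. \<forall>z\<in>VI. d 0 x y z = x \<and> e n x y z = z)"
       "(\<forall>k<n. even k \<longrightarrow> (\<forall>x\<in>VI. \<forall>y\<in>VI.
           d k x y y = d (Suc k) x y y \<and> e k x y y = e (Suc k) x y y))"
       "(\<forall>k<n. odd k \<longrightarrow> (\<forall>x\<in>VI. \<forall>y\<in>VI.
           d k x x y = d (Suc k) x x y \<and> e k x x y = e (Suc k) x x y))"
       "(\<forall>x\<in>VI. \<forall>y\<in>VI. d n x y y = p x y y \<and> p x x y = e 0 x x y)"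
       "(\<forall>k<n. odd k \<longrightarrow> (\<forall>x\<in>VI. \<forall>y\<in>VI. d k x y x = d (Suc k) x y x))"
       "(\<forall>k<n. even k \<longrightarrow> (\<forall>x\<in>VI. \<forall>y\<in>VI. e k x y x = e (Suc k) x y x))"
    using assms unfolding hobby_mckenzie_def by (elim exE conjE) (rule that; assumption)
  show ?thesis unfolding hobby_mckenzie_def
    apply (rule exI[of _ n], rule exI[of _ "\<lambda>k. R3 (d k)"], rule exI[of _ "R3 p"], rule exI[of _ "\<lambda>k. R3 (e k)"])
    apply (intro conjI)
    subgoal using h(1) pol3_R idem3_R by blast
    subgoal using h(2) by (rule pol3_R)
    subgoal using h(3) by (rule idem3_R)
    subgoal using h(4) unfolding R3_def by force
    subgoal using h(5) unfolding R3_def by force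
    subgoal using h(6) unfolding R3_def by force
    subgoal using h(7) unfolding R3_def by force
    subgoal using h(8) unfolding R3_def by force
    subgoal using h(9) unfolding R3_def by force
    done
qed

lemma SD_iso: "SD_join V E \<longleftrightarrow> SD_join VI EI"
  unfolding SD_join_def using wnu_L wnu_R hm_L hm_R by blast

lemma base_bv: "blowup_vertices V 0 0 = VI"
  unfolding blowup_vertices_def by auto

lemma base_be: "blowup_edges V E 0 0 = EI"
proof (rule set_eqI)
  fix x :: "('a + int) \<times> ('a + int)"
  obtain a b where x: "x = (a, b)" by fastforce
  show "x \<in> blowup_edges V E 0 0 \<longleftrightarrow> x \<in> EI"
    unfolding x by (cases a; cases b) (auto simp: be_mem)
qed

end

theorem corollary5p6:
  fixes V :: "'a set" and E :: "('a \<times> 'a) set" and i j :: int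
  assumes "digraph V E" and "i \<le> 0" and "0 \<le> j"
  shows "SD_join V E \<longleftrightarrow> SD_join (blowup_vertices V i j) (blowup_edges V E i j)"
proof -
  have EV: "E \<subseteq> V \<times> V" using assms(1) unfolding digraph_def by blast
  have sinks: "SD_join (blowup_vertices V 0 0) (blowup_edges V E 0 0) \<longleftrightarrow>
      SD_join (blowup_vertices V 0 (int m)) (blowup_edges V E 0 (int m))" for m :: nat
  proof (induction m)
    case 0 show ?case by simp
  next
    case (Suc m)
    have "SD_join (blowup_vertices V 0 (int m)) (blowup_edges V E 0 (int m)) \<longleftrightarrow>
       SD_join (insert (Inr (int m + 1)) (blowup_vertices V 0 (int m)))
          (blowup_edges V E 0 (int m) \<union> blowup_vertices V 0 (int m) \<times> {Inr (int m + 1)})"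
      by (rule SD_sink[OF be_sub[OF EV] bv_sink_notin]) simp
    also have "\<dots> \<longleftrightarrow> SD_join (blowup_vertices V 0 (int m + 1)) (blowup_edges V E 0 (int m + 1))"
      using bv_sink[where V=V and i=0 and j="int m"] be_sink[where V=V and E=E and i=0 and j="int m"] by simp
    finally show ?case using Suc by (simp add: add.commute)
  qed
  have srcs: "SD_join (blowup_vertices V 0 j) (blowup_edges V E 0 j) \<longleftrightarrow>
      SD_join (blowup_vertices V (- int m) j) (blowup_edges V E (- int m) j)" for m :: nat
  proof (induction m)
    case 0 show ?case by simp
  next
    case (Suc m)
    have "SD_join (blowup_vertices V (- int m) j) (blowup_edges V E (- int m) j) \<longleftrightarrow>
       SD_join (insert (Inr (- int m - 1)) (blowup_vertices V (- int m) j))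
          (blowup_edges V E (- int m) j \<union> {Inr (- int m - 1)} \<times> blowup_vertices V (- int m) j)"
      by (rule SD_src[OF be_sub[OF EV] bv_src_notin]) simp
    also have "\<dots> \<longleftrightarrow> SD_join (blowup_vertices V (- int m - 1) j) (blowup_edges V E (- int m - 1) j)"
      using bv_src[where V=V and j=j and i="- int m"] be_src[where V=V and E=E and j=j and i="- int m"] by simp
    finally have "SD_join (blowup_vertices V 0 j) (blowup_edges V E 0 j) \<longleftrightarrow> SD_join (blowup_vertices V (- int m - 1) j) (blowup_edges V E (- int m - 1) j)" using Suc by simp
    moreover have "- int (Suc m) = - int m - 1" by simp
    ultimately show ?case by metis
  qed
  have "SD_join V E \<longleftrightarrow> SD_join (blowup_vertices V 0 0) (blowup_edges V E 0 0)"
    using SD_iso[of V E] base_bv[of V] base_be[of V E] by simp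
  also have "\<dots> \<longleftrightarrow> SD_join (blowup_vertices V 0 j) (blowup_edges V E 0 j)"
    using sinks[of "nat j"] assms(3) by simp
  also have "\<dots> \<longleftrightarrow> SD_join (blowup_vertices V i j) (blowup_edges V E i j)"
    using srcs[of "nat (- i)"] assms(2) by simp
  finally show ?thesis .
qed


end
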